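(* Let $G$ be a graph and let $x$ be a vertex of odd degree in $G$ such that the subgraph induced by the neighbours of $x$ is a path $P$. Then in any proper $3$-colouring of $G$, the two end-points of $P$ receive the same colour.
   Context: A proper $3$-colouring assigns to each vertex one of three colours so that adjacent vertices receive different colours. *)

theory Defs
  imports Main
begin

definition graph :: "'a set \<Rightarrow> ('a \<Rightarrow> 'a \<Rightarrow> bool) \<Rightarrow> bool" where
  "graph V E \<longleftrightarrow> (\<forall>u v. E u v \<longrightarrow> u \<in> V \<and> v \<in> V) \<and>
                   (\<forall>u v. E u v \<longrightarrow> E v u) \<and> (\<forall>v. \<not> E v v)"

definition neighbours :: "'a set \<Rightarrow> ('a \<Rightarrow> 'a \<Rightarrow> bool) \<Rightarrow> 'a \<Rightarrow> 'a set" where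
  "neighbours V E x = {y \<in> V. E x y}"

definition degree :: "'a set \<Rightarrow> ('a \<Rightarrow> 'a \<Rightarrow> bool) \<Rightarrow> 'a \<Rightarrow> nat" where
  "degree V E x = card (neighbours V E x)"

definition induced_path :: "('a \<Rightarrow> 'a \<Rightarrow> bool) \<Rightarrow> 'a set \<Rightarrow> 'a list \<Rightarrow> bool" where
  "induced_path E S p \<longleftrightarrow> p \<noteq> [] \<and> distinct p \<and> set p = S \<and>
     (\<forall>i < length p. \<forall>j < length p. E (p ! i) (p ! j) \<longleftrightarrow> (i + 1 = j \<or> j + 1 = i))"

definition proper_3_colouring :: "'a set \<Rightarrow> ('a \<Rightarrow> 'a \<Rightarrow> bool) \<Rightarrow> ('a \<Rightarrow> nat) \<Rightarrow> bool" where
  "proper_3_colouring V E c \<longleftrightarrow> (\<forall>v \<in> V. c v < 3) \<and> (\<forall>u v. E u v \<longrightarrow> c u \<noteq> c v)"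

end

theory Submission
  imports Defs
begin

theorem lemma1:
  fixes V :: "'a set" and E :: "'a \<Rightarrow> 'a \<Rightarrow> bool" and x :: 'a
    and p :: "'a list" and c :: "'a \<Rightarrow> nat"
  assumes "graph V E"
    and "x \<in> V"
    and "finite (neighbours V E x)"
    and "odd (degree V E x)"
    and "induced_path E (neighbours V E x) p"
    and "proper_3_colouring V E c"
  shows "c (hd p) = c (last p)"
proof -
  have ne: "p \<noteq> []" and dp: "distinct p" and sp: "set p = neighbours V E x"
    and adj: "\<forall>i < length p. \<forall>j < length p. E (p ! i) (p ! j) \<longleftrightarrow> (i + 1 = j \<or> j + 1 = i)"
    using assms(5) unfolding induced_path_def by auto
  have col: "\<forall>v \<in> V. c v < 3" and prp: "\<And>u v. E u v \<Longrightarrow> c u \<noteq> c v"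
    using assms(6) unfolding proper_3_colouring_def by auto
  have len: "odd (length p)"
    using assms(4) dp sp unfolding degree_def by (metis distinct_card)
  have mem: "\<And>i. i < length p \<Longrightarrow> p ! i \<in> V \<and> E x (p ! i)"
    using sp nth_mem unfolding neighbours_def by fastforce
  have cx: "c x < 3" using col assms(2) by auto
  have step: "\<And>i. i + 2 < length p \<Longrightarrow> c (p ! (i+2)) = c (p ! i)"
  proof -
    fix i assume i: "i + 2 < length p"
    have a: "c (p!i) < 3" "c (p!(i+1)) < 3" "c (p!(i+2)) < 3"
      using mem[of i] mem[of "i+1"] mem[of "i+2"] col i by auto
    have b: "c (p!i) \<noteq> c x" "c (p!(i+1)) \<noteq> c x" "c (p!(i+2)) \<noteq> c x"
      using mem[of i] mem[of "i+1"] mem[of "i+2"] prp i by (auto dest: prp simp: eq_commute) 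
    have d: "c (p!i) \<noteq> c (p!(i+1))" "c (p!(i+2)) \<noteq> c (p!(i+1))"
      using adj i prp by (metis add_lessD1 Suc_eq_plus1 add_Suc_right one_add_one)+
    show "c (p ! (i+2)) = c (p ! i)" using a b d cx by linarith
  qed
  have ev: "\<And>k. 2*k < length p \<Longrightarrow> c (p ! (2*k)) = c (p ! 0)"
  proof -
    fix k show "2*k < length p \<Longrightarrow> c (p ! (2*k)) = c (p ! 0)"
    proof (induction k)
      case 0 then show ?case by simp
    next
      case (Suc k)
      then have "c (p ! (2*k+2)) = c (p ! (2*k))" using step by simp
      with Suc show ?case by simp
    qed
  qed
  obtain k where k: "length p = 2*k + 1" using len by (metis oddE)
  have "c (p ! (2*k)) = c (p ! 0)" using ev k by simp
  then show ?thesis using ne k by (simp add: hd_conv_nth last_conv_nth)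
qed

end
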